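(* The finite derivative test $\mathcal D$ is error-free.
   Context: Let $\Omega=\{0,1\}$, $\Omega^\infty$ the set of infinite sequences $\omega=(\omega_1,\omega_2,\dots)$, and $\omega^t=(\omega_1,\dots,\omega_t)$ (also used for the cylinder set of all sequences with this prefix; $\omega^0=\emptyset$). $\mathcal G_t$ is the $\sigma$-algebra generated by the length-$t$ cylinders and $\mathcal G_\infty$ the $\sigma$-algebra generated by all cylinders. $\Delta(\Omega)$ is the set of probability distributions on $\Omega$; for $p\in\Delta(\Omega)$ and $x\in\Omega$, $p[x]$ is the probability of $x$. A forecasting strategy is a map $f:\bigcup_{t\ge0}(\Omega\times\Delta(\Omega)\times\Delta(\Omega))^t\to\Delta(\Omega)$; $F$ is the set of all forecasting strategies. Given an ordered pair $\vec f=(f,g)\in F\times F$ and $\omega\in\Omega^\infty$, the play path $(\omega,\vec f)$ is defined recursively: $(\omega,\vec f)^0=\emptyset$ and its $t$-th entry is $(\omega_t,f((\omega,\vec f)^{t-1}),g((\omega,\vec f)^{t-1}))$, where $(\omega,\vec f)^t$ is the prefix of length $t$. The pair $\vec f$ induces two probability measures on $(\Omega^\infty,\mathcal G_\infty)$, again denoted $f$ and $g$ (they depend on the pair), determined by $f(\omega^t)=\prod_{n=1}^t f((\omega,\vec f)^{n-1})[\omega_n]$ and $g(\omega^t)=\prod_{n=1}^t g((\omega,\vec f)^{n-1})[\omega_n]$. A (cardinal comparison) test is a sequence $T=(T_t)_{t>0}$ of $\mathcal G_t$-measurable functions $T_t:(\Omega\times\Delta(\Omega)\times\Delta(\Omega))^\infty\to[0,1]$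 (depending only on the first $t$ entries); write $T_t(\omega,\vec f)=T_t((\omega,\vec f))$ and $T(\omega,\vec f)=\lim_t T_t(\omega,\vec f)$ whenever the limit exists. For $\epsilon\in(0,1)$ let $L^{\vec f}_{T,\epsilon}=\{\omega:T(\omega,\vec f)\text{ exists and }>\epsilon\}$ and $R^{\vec f}_{T,\epsilon}=\{\omega:T(\omega,\vec f)\text{ exists and }<\epsilon\}$. $T$ is error-free if for all $\vec f=(f,g)\in F\times F$ and every measurable $A\subseteq\Omega^\infty$: for all $\epsilon\in(0,\frac12)$, $f(A\cap R^{\vec f}_{T,\epsilon})\le\frac{\epsilon}{1-\epsilon}\,g(A\cap R^{\vec f}_{T,\epsilon})$, and for all $\epsilon\in(\frac12,1)$, $g(A\cap L^{\vec f}_{T,\epsilon})\le\frac{1-\epsilon}{\epsilon}\,f(A\cap L^{\vec f}_{T,\epsilon})$ (with $f,g$ the measures induced by $\vec f$). The finite derivative test $\mathcal D$ is defined for $t\ge0$ by $\mathcal D_{t+1}(\omega,\vec f)=\frac{f(\omega^t)}{f(\omega^t)+g(\omega^t)}$ if $f(\omega^t)>0$ or $g(\omega^t)>0$, and $\frac12$ otherwise. *)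

theory Defs
  imports "HOL-Probability.Probability"
begin

text \<open>Outcomes: \<Omega> = {0,1} is rendered as bool (True = 1).
  Forecasts \<Delta>(\<Omega>) are rendered as bool pmf; p[x] is pmf p x.
  An infinite sequence \<omega> = (\<omega>_1, \<omega>_2, ...) is a function nat => bool with
  \<omega> i standing for \<omega>_(i+1).\<close>

type_synonym entry = "bool \<times> bool pmf \<times> bool pmf"
type_synonym strategy = "entry list \<Rightarrow> bool pmf"

fun play :: "strategy \<Rightarrow> strategy \<Rightarrow> (nat \<Rightarrow> bool) \<Rightarrow> nat \<Rightarrow> entry list" where
  "play f g \<omega> 0 = []"
| "play f g \<omega> (Suc t) = play f g \<omega> t @ [(\<omega> t, f (play f g \<omega> t), g (play f g \<omega> t))]"

definition Omega_inf :: "(nat \<Rightarrow> bool) measure" where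
  "Omega_inf = PiM UNIV (\<lambda>_. count_space UNIV)"

definition cyl :: "(nat \<Rightarrow> bool) \<Rightarrow> nat \<Rightarrow> (nat \<Rightarrow> bool) set" where
  "cyl \<omega> t = {\<omega>'. \<forall>i<t. \<omega>' i = \<omega> i}"

text \<open>mu is the measure on (\<Omega>^\<infinity>, G_\<infinity>) induced by the pair (f,g) using the forecasts
  of the strategy selected by sel (sel = fst gives the measure f, sel = snd gives g).\<close>
definition induced_measure ::
  "strategy \<Rightarrow> strategy \<Rightarrow> (bool pmf \<times> bool pmf \<Rightarrow> bool pmf) \<Rightarrow> (nat \<Rightarrow> bool) measure \<Rightarrow> bool" where
  "induced_measure f g sel \<mu> \<longleftrightarrow>
     prob_space \<mu> \<and> sets \<mu> = sets Omega_inf \<and>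
     (\<forall>\<omega> t. measure \<mu> (cyl \<omega> t) =
        (\<Prod>n<t. pmf (sel (f (play f g \<omega> n), g (play f g \<omega> n))) (\<omega> n)))"

text \<open>A test: T t h is T_t evaluated on a play path whose length-t prefix is h
  (T_t depends only on the first t entries). Only t > 0 is used.\<close>
type_synonym test = "nat \<Rightarrow> entry list \<Rightarrow> real"

definition L_set :: "test \<Rightarrow> strategy \<Rightarrow> strategy \<Rightarrow> real \<Rightarrow> (nat \<Rightarrow> bool) set" where
  "L_set T f g \<epsilon> = {\<omega>. \<exists>l. ((\<lambda>t. T t (play f g \<omega> t)) \<longlonglongrightarrow> l) \<and> l > \<epsilon>}"

definition R_set :: "test \<Rightarrow> strategy \<Rightarrow> strategy \<Rightarrow> real \<Rightarrow> (nat \<Rightarrow> bool) set" where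
  "R_set T f g \<epsilon> = {\<omega>. \<exists>l. ((\<lambda>t. T t (play f g \<omega> t)) \<longlonglongrightarrow> l) \<and> l < \<epsilon>}"

definition error_free :: "test \<Rightarrow> bool" where
  "error_free T \<longleftrightarrow>
    (\<forall>f g \<mu>f \<mu>g. induced_measure f g fst \<mu>f \<longrightarrow> induced_measure f g snd \<mu>g \<longrightarrow>
      (\<forall>A \<in> sets Omega_inf.
        (\<forall>\<epsilon>::real. 0 < \<epsilon> \<and> \<epsilon> < 1/2 \<longrightarrow>
           measure \<mu>f (A \<inter> R_set T f g \<epsilon>) \<le> \<epsilon> / (1 - \<epsilon>) * measure \<mu>g (A \<inter> R_set T f g \<epsilon>)) \<and>
        (\<forall>\<epsilon>::real. 1/2 < \<epsilon> \<and> \<epsilon> < 1 \<longrightarrow>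
           measure \<mu>g (A \<inter> L_set T f g \<epsilon>) \<le> (1 - \<epsilon>) / \<epsilon> * measure \<mu>f (A \<inter> L_set T f g \<epsilon>))))"

text \<open>f(\<omega>^t) and g(\<omega>^t) read off from the first t entries of the play path:
  the t-th entry is (\<omega>_t, f(..), g(..)).\<close>
definition prefix_prob_f :: "entry list \<Rightarrow> nat \<Rightarrow> real" where
  "prefix_prob_f h t = (\<Prod>n<t. pmf (fst (snd (h ! n))) (fst (h ! n)))"

definition prefix_prob_g :: "entry list \<Rightarrow> nat \<Rightarrow> real" where
  "prefix_prob_g h t = (\<Prod>n<t. pmf (snd (snd (h ! n))) (fst (h ! n)))"

text \<open>The finite derivative test: D_(t+1) = f(\<omega>^t) / (f(\<omega>^t) + g(\<omega>^t)), or 1/2.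
  D_0 is irrelevant (tests are indexed by t > 0); set to 1/2.\<close>
fun deriv_test :: test where
  "deriv_test 0 h = 1/2"
| "deriv_test (Suc t) h =
     (let a = prefix_prob_f h t; b = prefix_prob_g h t in
      if a > 0 \<or> b > 0 then a / (a + b) else 1/2)"

end

theory Submission imports Defs begin

definition det :: "nat \<Rightarrow> (nat \<Rightarrow> bool) set \<Rightarrow> bool" where
  "det t S \<longleftrightarrow> (\<forall>\<omega> \<omega>'. (\<forall>i<t. \<omega> i = \<omega>' i) \<longrightarrow> \<omega> \<in> S \<longrightarrow> \<omega>' \<in> S)"

definition ext :: "nat \<Rightarrow> bool list \<Rightarrow> nat \<Rightarrow> bool" where
  "ext t xs i = (if i < t then xs ! i else False)"

lemma space_Om: "space Omega_inf = UNIV"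
  by (simp add: Omega_inf_def space_PiM)

lemma cyl_eq: "(\<forall>i<t. \<omega> i = \<omega>' i) \<Longrightarrow> cyl \<omega> t = cyl \<omega>' t"
  by (auto simp: cyl_def)

lemma comp_sets: "{x. x i = b} \<in> sets Omega_inf"
proof -
  have "(\<lambda>x. x i) \<in> measurable Omega_inf (count_space UNIV)"
    unfolding Omega_inf_def by (rule measurable_component_singleton) simp
  then have "(\<lambda>x. x i) -` {b} \<inter> space Omega_inf \<in> sets Omega_inf"
    by (rule measurable_sets) simp
  then show ?thesis by (simp add: space_Om vimage_def)
qed

lemma cyl_sets: "cyl \<omega> t \<in> sets Omega_inf"
proof (induction t)
  case 0
  have "cyl \<omega> 0 = space Omega_inf" by (simp add: cyl_def space_Om)
  then show ?case by simp
next
  case (Suc t)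
  have "cyl \<omega> (Suc t) = cyl \<omega> t \<inter> {x. x t = \<omega> t}"
    by (auto simp: cyl_def less_Suc_eq)
  then show ?case using Suc comp_sets by simp
qed

definition K :: "nat \<Rightarrow> (nat \<Rightarrow> bool) set \<Rightarrow> bool list set" where
  "K t S = {xs. length xs = t \<and> ext t xs \<in> S}"

lemma K_finite: "finite (K t S)"
proof -
  have "K t S \<subseteq> {xs. set xs \<subseteq> UNIV \<and> length xs = t}" by (auto simp: K_def)
  moreover have "finite {xs::bool list. set xs \<subseteq> UNIV \<and> length xs = t}"
    by (rule finite_lists_length_eq) simp
  ultimately show ?thesis by (rule finite_subset)
qed

lemma decomp:
  assumes "det t S"
  shows "S = (\<Union>xs\<in>K t S. cyl (ext t xs) t)"
proof
  show "S \<subseteq> (\<Union>xs\<in>K t S. cyl (ext t xs) t)"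
  proof
    fix \<omega> assume w: "\<omega> \<in> S"
    let ?xs = "map \<omega> [0..<t]"
    have agree: "\<forall>i<t. \<omega> i = ext t ?xs i" by (simp add: ext_def)
    then have "ext t ?xs \<in> S" using assms w unfolding det_def by blast
    then have "?xs \<in> K t S" by (simp add: K_def)
    moreover have "\<omega> \<in> cyl (ext t ?xs) t" using agree by (simp add: cyl_def)
    ultimately show "\<omega> \<in> (\<Union>xs\<in>K t S. cyl (ext t xs) t)" by blast
  qed
next
  show "(\<Union>xs\<in>K t S. cyl (ext t xs) t) \<subseteq> S"
  proof clarify
    fix xs \<omega> assume "xs \<in> K t S" "\<omega> \<in> cyl (ext t xs) t"
    then have "ext t xs \<in> S" "\<forall>i<t. ext t xs i = \<omega> i" unfolding K_def cyl_def by auto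
    then show "\<omega> \<in> S" using assms unfolding det_def by blast
  qed
qed

lemma disj: "disjoint_family_on (\<lambda>xs. cyl (ext t xs) t) (K t S)"
  unfolding disjoint_family_on_def
proof (intro ballI impI equalityI subsetI)
  fix xs ys \<omega> assume xs: "xs \<in> K t S" and ys: "ys \<in> K t S" and ne: "xs \<noteq> ys"
    and ab: "\<omega> \<in> cyl (ext t xs) t \<inter> cyl (ext t ys) t"
  then have a: "\<omega> \<in> cyl (ext t xs) t" and b: "\<omega> \<in> cyl (ext t ys) t" by auto
  have "\<forall>i<length xs. xs ! i = ys ! i"
  proof (intro allI impI)
    fix i assume "i < length xs"
    then have "i < t" using xs by (simp add: K_def)
    then show "xs ! i = ys ! i" using a b by (simp add: cyl_def ext_def)
  qed
  then have "xs = ys" using xs ys by (simp add: K_def list_eq_iff_nth_eq)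
  then show "\<omega> \<in> {}" using ne by simp
qed simp

lemma det_sets: "det t S \<Longrightarrow> S \<in> sets Omega_inf"
  apply (subst decomp, assumption)
  apply (rule sets.finite_UN)
  using K_finite cyl_sets by auto

lemma det_mono: "det t S \<Longrightarrow> t \<le> s \<Longrightarrow> det s S"
proof -
  assume d: "det t S" and ts: "t \<le> s"
  show "det s S" unfolding det_def
  proof (intro allI impI)
    fix \<omega> \<omega>' assume a: "\<forall>i<s. \<omega> i = \<omega>' i" and w: "\<omega> \<in> S"
    have "\<forall>i<t. \<omega> i = \<omega>' i" using a ts by simp
    then show "\<omega>' \<in> S" using d w unfolding det_def by blast
  qed
qed


inductive_set mc :: "'a set set \<Rightarrow> 'a set set" for G where
  base: "S \<in> G \<Longrightarrow> S \<in> mc G"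
| inc: "(\<And>i. A i \<in> mc G) \<Longrightarrow> incseq A \<Longrightarrow> (\<Union>i. A i) \<in> mc G"
| dec: "(\<And>i. A i \<in> mc G) \<Longrightarrow> decseq A \<Longrightarrow> (\<Inter>i. A i) \<in> mc G"

lemma mc_compl:
  assumes "\<And>S. S \<in> G \<Longrightarrow> -S \<in> G"
  shows "S \<in> mc G \<Longrightarrow> -S \<in> mc G"
proof (induction rule: mc.induct)
  case (base S) then show ?case using assms by (auto intro: mc.base)
next
  case (inc A)
  have "-(\<Union>i. A i) = (\<Inter>i. - A i)" by auto
  moreover have "decseq (\<lambda>i. - A i)" using inc.hyps(2) by (auto simp: incseq_def decseq_def)
  ultimately show ?case using inc.IH by (auto intro: mc.dec)
next
  case (dec A)
  have "-(\<Inter>i. A i) = (\<Union>i. - A i)" by auto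
  moreover have "incseq (\<lambda>i. - A i)" using dec.hyps(2) by (auto simp: incseq_def decseq_def)
  ultimately show ?case using dec.IH by (auto intro: mc.inc)
qed

lemma mc_un1:
  assumes un: "\<And>a b. a \<in> G \<Longrightarrow> b \<in> G \<Longrightarrow> a \<union> b \<in> G" and a: "a \<in> G"
  shows "S \<in> mc G \<Longrightarrow> a \<union> S \<in> mc G"
proof (induction rule: mc.induct)
  case (base S) then show ?case using assms by (auto intro: mc.base)
next
  case (inc A)
  have "a \<union> (\<Union>i. A i) = (\<Union>i. a \<union> A i)" by auto
  moreover have "(\<Union>i. a \<union> A i) \<in> mc G"
    by (rule mc.inc) (use inc.IH inc.hyps(2) in \<open>auto simp: incseq_def\<close>)
  ultimately show ?case by simp
next
  case (dec A)
  have "a \<union> (\<Inter>i. A i) = (\<Inter>i. a \<union> A i)" by auto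
  moreover have "(\<Inter>i. a \<union> A i) \<in> mc G"
    by (rule mc.dec) (use dec.IH dec.hyps(2) in \<open>auto simp: decseq_def\<close>)
  ultimately show ?case by simp
qed

lemma mc_un:
  assumes un: "\<And>a b. a \<in> G \<Longrightarrow> b \<in> G \<Longrightarrow> a \<union> b \<in> G" and b: "b \<in> mc G"
  shows "S \<in> mc G \<Longrightarrow> S \<union> b \<in> mc G"
proof (induction rule: mc.induct)
  case (base S) then show ?case using mc_un1[OF un base b] by simp
next
  case (inc A)
  have "(\<Union>i. A i) \<union> b = (\<Union>i. A i \<union> b)" by auto
  moreover have "(\<Union>i. A i \<union> b) \<in> mc G"
    by (rule mc.inc) (use inc.IH inc.hyps(2) in \<open>auto simp: incseq_def\<close>)
  ultimately show ?case by simp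
next
  case (dec A)
  have "(\<Inter>i. A i) \<union> b = (\<Inter>i. A i \<union> b)" by auto
  moreover have "(\<Inter>i. A i \<union> b) \<in> mc G"
    by (rule mc.dec) (use dec.IH dec.hyps(2) in \<open>auto simp: decseq_def\<close>)
  ultimately show ?case by simp
qed

lemma sigma_mc:
  assumes compl: "\<And>S. S \<in> G \<Longrightarrow> -S \<in> G"
    and un: "\<And>a b. a \<in> G \<Longrightarrow> b \<in> G \<Longrightarrow> a \<union> b \<in> G" and U: "UNIV \<in> G"
  shows "S \<in> sigma_sets UNIV G \<Longrightarrow> S \<in> mc G"
proof (induction rule: sigma_sets.induct)
  case (Basic a) then show ?case by (rule mc.base)
next
  case Empty
  have "-UNIV \<in> G" using compl U by blast
  then show ?case by (auto intro: mc.base)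
next
  case (Compl a)
  then show ?case using mc_compl[OF compl] by (simp add: Compl_eq_Diff_UNIV[symmetric])
next
  case (Union A)
  define B where "B n = (\<Union>i\<le>n. A i)" for n
  have B: "B n \<in> mc G" for n
  proof (induction n)
    case 0 then show ?case using Union by (simp add: B_def)
  next
    case (Suc n)
    have "B (Suc n) = B n \<union> A (Suc n)" by (auto simp: B_def atMost_Suc)
    then show ?case using mc_un[OF un Union.IH[of "Suc n"] Suc] by simp
  qed
  have "incseq B" unfolding incseq_def B_def by (meson UN_mono atMost_subset_iff order_refl)
  moreover have "(\<Union>n. B n) = (\<Union>i. A i)" by (auto simp: B_def)
  ultimately show ?case using B mc.inc[of B G] by simp
qed

lemma mc_induct_class:
  assumes "G \<subseteq> C"
    and "\<And>A. (\<And>i. A i \<in> C) \<Longrightarrow> incseq A \<Longrightarrow> (\<Union>i. A i) \<in> C"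
    and "\<And>A. (\<And>i. A i \<in> C) \<Longrightarrow> decseq A \<Longrightarrow> (\<Inter>i. A i) \<in> C"
  shows "S \<in> mc G \<Longrightarrow> S \<in> C"
  by (induction rule: mc.induct) (use assms in auto)


lemma det_compl: "det t S \<Longrightarrow> det t (-S)"
proof -
  assume d: "det t S"
  show "det t (-S)" unfolding det_def
  proof (intro allI impI)
    fix \<omega> \<omega>' assume a: "\<forall>i<t. \<omega> i = \<omega>' i" and w: "\<omega> \<in> - S"
    have a': "\<forall>i<t. \<omega>' i = \<omega> i" using a by simp
    show "\<omega>' \<in> - S"
    proof
      assume "\<omega>' \<in> S"
      then have "\<omega> \<in> S" using d a' unfolding det_def by blast
      then show False using w by simp
    qed
  qed
qed

lemma det_un: "det t a \<Longrightarrow> det s b \<Longrightarrow> det (max t s) (a \<union> b)"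
proof -
  assume "det t a" "det s b"
  then have "det (max t s) a" "det (max t s) b" by (auto intro: det_mono)
  then show "det (max t s) (a \<union> b)" unfolding det_def by blast
qed

lemma sets_Om_sub: "sets Omega_inf \<subseteq> sigma_sets UNIV {S. \<exists>t. det t S}"
proof -
  have "sets Omega_inf = sigma_sets UNIV {{f. f i \<in> A} | i A. A \<in> sets (count_space (UNIV::bool set))}"
    unfolding Omega_inf_def sets_PiM_single by simp
  also have "\<dots> \<subseteq> sigma_sets UNIV {S. \<exists>t. det t S}"
  proof (rule sigma_sets_mono)
    show "{{f. f i \<in> A} | i A. A \<in> sets (count_space (UNIV::bool set))} \<subseteq> sigma_sets UNIV {S. \<exists>t. det t S}"
    proof clarify
      fix i and A :: "bool set"
      have "det (Suc i) {f. f i \<in> A}" unfolding det_def by auto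
      then show "{f. f i \<in> A} \<in> sigma_sets UNIV {S. \<exists>t. det t S}" by (blast intro: sigma_sets.Basic)
    qed
  qed
  finally show ?thesis .
qed

lemma key:
  fixes M1 M2 :: "(nat \<Rightarrow> bool) measure" and c :: real
  assumes fm1: "finite_measure M1" and fm2: "finite_measure M2"
    and s1: "sets M1 = sets Omega_inf" and s2: "sets M2 = sets Omega_inf"
    and S: "S \<subseteq> (\<Union>N. {\<omega>. \<forall>t\<ge>N. measure M1 (cyl \<omega> t) \<le> c * measure M2 (cyl \<omega> t)})"
  shows "measure M1 S \<le> c * measure M2 S"
proof -
  interpret m1: finite_measure M1 by (rule fm1)
  interpret m2: finite_measure M2 by (rule fm2)
  define Q where "Q t \<omega> \<longleftrightarrow> measure M1 (cyl \<omega> t) \<le> c * measure M2 (cyl \<omega> t)" for t \<omega>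
  define E where "E N = {\<omega>. \<forall>t\<ge>N. Q t \<omega>}" for N
  have Qdet: "Q t \<omega> = Q t \<omega>'" if "\<forall>i<t. \<omega> i = \<omega>' i" for t \<omega> \<omega>'
    using cyl_eq[OF that] by (simp add: Q_def)
  have detF: "det t {\<omega>. Q t \<omega>}" for t
    unfolding det_def
  proof (intro allI impI)
    fix \<omega> \<omega>' assume "\<forall>i<t. \<omega> i = \<omega>' i" "\<omega> \<in> {\<omega>. Q t \<omega>}"
    then show "\<omega>' \<in> {\<omega>. Q t \<omega>}" using Qdet[of t \<omega> \<omega>'] by simp
  qed
  have E_sets: "E N \<in> sets Omega_inf" for N
  proof -
    have "E N = (\<Inter>i. {\<omega>. Q (i + N) \<omega>})" unfolding E_def
    proof (intro equalityI subsetI)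
      fix \<omega> assume "\<omega> \<in> {\<omega>. \<forall>t\<ge>N. Q t \<omega>}"
      then show "\<omega> \<in> (\<Inter>i. {\<omega>. Q (i + N) \<omega>})" by simp
    next
      fix \<omega> assume h: "\<omega> \<in> (\<Inter>i. {\<omega>. Q (i + N) \<omega>})"
      have "Q t \<omega>" if "t \<ge> N" for t
        using h[THEN INT_D, of "t - N"] that by simp
      then show "\<omega> \<in> {\<omega>. \<forall>t\<ge>N. Q t \<omega>}" by simp
    qed
    moreover have "{\<omega>. Q (i + N) \<omega>} \<in> sets Omega_inf" for i by (rule det_sets[OF detF])
    ultimately show ?thesis by auto
  qed
  have finS: "measure Mj S' = (\<Sum>xs\<in>K t S'. measure Mj (cyl (ext t xs) t))"
    if "det t S'" "finite_measure Mj" "sets Mj = sets Omega_inf" for t S' Mj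
  proof -
    have "measure Mj S' = measure Mj (\<Union>xs\<in>K t S'. cyl (ext t xs) t)"
      using decomp[OF that(1)] by simp
    also have "\<dots> = (\<Sum>xs\<in>K t S'. measure Mj (cyl (ext t xs) t))"
      by (rule measure_finite_Union)
        (use K_finite disj cyl_sets that(2,3) finite_measure.emeasure_finite[OF that(2)] in auto)
    finally show ?thesis .
  qed
  have step2: "measure M1 S' \<le> c * measure M2 S'" if "det t S'" "S' \<subseteq> {\<omega>. Q t \<omega>}" for t S'
  proof -
    have "measure M1 S' = (\<Sum>xs\<in>K t S'. measure M1 (cyl (ext t xs) t))"
      using finS[OF that(1) fm1 s1] .
    also have "\<dots> \<le> (\<Sum>xs\<in>K t S'. c * measure M2 (cyl (ext t xs) t))"
    proof (rule sum_mono)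
      fix xs assume "xs \<in> K t S'"
      then have "ext t xs \<in> S'" by (simp add: K_def)
      then show "measure M1 (cyl (ext t xs) t) \<le> c * measure M2 (cyl (ext t xs) t)"
        using that(2) by (auto simp: Q_def)
    qed
    also have "\<dots> = c * measure M2 S'"
      using finS[OF that(1) fm2 s2] by (simp add: sum_distrib_left)
    finally show ?thesis .
  qed
  have step3: "measure M1 (S' \<inter> E N) \<le> c * measure M2 (S' \<inter> E N)" if "det s S'" for s S' N
  proof -
    define D where "D T = S' \<inter> {\<omega>. \<forall>t. N \<le> t \<and> t \<le> T + N + s \<longrightarrow> Q t \<omega>}" for T
    have dD: "det (T + N + s) (D T)" for T
    proof -
      have "det (T + N + s) S'" using det_mono[OF that] by simp
      moreover have "det (T + N + s) {\<omega>. \<forall>t. N \<le> t \<and> t \<le> T + N + s \<longrightarrow> Q t \<omega>}"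
        unfolding det_def
      proof (intro allI impI)
        fix \<omega> \<omega>' assume a: "\<forall>i<T + N + s. \<omega> i = \<omega>' i"
          and w: "\<omega> \<in> {\<omega>. \<forall>t. N \<le> t \<and> t \<le> T + N + s \<longrightarrow> Q t \<omega>}"
        show "\<omega>' \<in> {\<omega>. \<forall>t. N \<le> t \<and> t \<le> T + N + s \<longrightarrow> Q t \<omega>}"
        proof (intro CollectI allI impI)
          fix t assume t: "N \<le> t \<and> t \<le> T + N + s"
          then have "\<forall>i<t. \<omega> i = \<omega>' i" using a by simp
          then show "Q t \<omega>'" using Qdet[of t \<omega> \<omega>'] w t by simp
        qed
      qed
      ultimately show ?thesis unfolding D_def det_def by blast
    qed
    have Dsets: "range D \<subseteq> sets M1" "range D \<subseteq> sets M2"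
      using det_sets[OF dD] s1 s2 by auto
    have decD: "decseq D" unfolding decseq_def D_def by auto
    have DI: "(\<Inter>T. D T) = S' \<inter> E N"
      unfolding D_def E_def
    proof (intro equalityI subsetI)
      fix \<omega> assume "\<omega> \<in> (\<Inter>T. S' \<inter> {\<omega>. \<forall>t. N \<le> t \<and> t \<le> T + N + s \<longrightarrow> Q t \<omega>})"
      then have h: "\<And>T. \<omega> \<in> S' \<and> (\<forall>t. N \<le> t \<and> t \<le> T + N + s \<longrightarrow> Q t \<omega>)" by blast
      have "Q t \<omega>" if "t \<ge> N" for t using h[of t] that by simp
      then show "\<omega> \<in> S' \<inter> {\<omega>. \<forall>t\<ge>N. Q t \<omega>}" using h[of 0] by blast
    qed blast
    have l1: "(\<lambda>T. measure M1 (D T)) \<longlonglongrightarrow> measure M1 (S' \<inter> E N)"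
      using m1.finite_Lim_measure_decseq[OF Dsets(1) decD] DI by simp
    have l2: "(\<lambda>T. c * measure M2 (D T)) \<longlonglongrightarrow> c * measure M2 (S' \<inter> E N)"
      using m2.finite_Lim_measure_decseq[OF Dsets(2) decD] DI by (simp add: tendsto_mult_left)
    show ?thesis
    proof (rule LIMSEQ_le[OF l1 l2], intro exI allI impI)
      fix T
      have "D T \<subseteq> {\<omega>. Q (T + N + s) \<omega>}" unfolding D_def by auto
      then show "measure M1 (D T) \<le> c * measure M2 (D T)" by (rule step2[OF dD])
    qed
  qed
  define C where "C N = {S'. S' \<in> sets Omega_inf \<and> measure M1 (S' \<inter> E N) \<le> c * measure M2 (S' \<inter> E N)}" for N
  have step4: "S' \<in> C N" if "S' \<in> sets Omega_inf" for S' N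
  proof -
    have mcS: "S' \<in> mc {S. \<exists>t. det t S}"
    proof (rule sigma_mc)
      show "S' \<in> sigma_sets UNIV {S. \<exists>t. det t S}" using that sets_Om_sub by blast
      show "- S \<in> {S. \<exists>t. det t S}" if "S \<in> {S. \<exists>t. det t S}" for S
        using that det_compl by blast
      show "a \<union> b \<in> {S. \<exists>t. det t S}" if "a \<in> {S. \<exists>t. det t S}" "b \<in> {S. \<exists>t. det t S}" for a b
        using that det_un by blast
      show "UNIV \<in> {S. \<exists>t. det t S}" by (auto simp: det_def)
    qed
    show ?thesis
    proof (rule mc_induct_class[OF _ _ _ mcS])
      show "{S. \<exists>t. det t S} \<subseteq> C N" using step3 det_sets by (auto simp: C_def)
    next
      fix A assume A: "\<And>i. A i \<in> C N" and inc: "incseq A"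
      have As: "range (\<lambda>i. A i \<inter> E N) \<subseteq> sets M1" "range (\<lambda>i. A i \<inter> E N) \<subseteq> sets M2"
        using A E_sets s1 s2 by (auto simp: C_def)
      have incA: "incseq (\<lambda>i. A i \<inter> E N)" using inc by (auto simp: incseq_def)
      have eq: "(\<Union>i. A i \<inter> E N) = (\<Union>i. A i) \<inter> E N" by auto
      have l1: "(\<lambda>i. measure M1 (A i \<inter> E N)) \<longlonglongrightarrow> measure M1 ((\<Union>i. A i) \<inter> E N)"
        using m1.finite_Lim_measure_incseq[OF As(1) incA] eq by simp
      have l2: "(\<lambda>i. c * measure M2 (A i \<inter> E N)) \<longlonglongrightarrow> c * measure M2 ((\<Union>i. A i) \<inter> E N)"
        using m2.finite_Lim_measure_incseq[OF As(2) incA] eq by (simp add: tendsto_mult_left)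
      have "measure M1 ((\<Union>i. A i) \<inter> E N) \<le> c * measure M2 ((\<Union>i. A i) \<inter> E N)"
        by (rule LIMSEQ_le[OF l1 l2]) (use A in \<open>auto simp: C_def\<close>)
      moreover have "(\<Union>i. A i) \<in> sets Omega_inf" using A by (auto simp: C_def)
      ultimately show "(\<Union>i. A i) \<in> C N" by (simp add: C_def)
    next
      fix A assume A: "\<And>i. A i \<in> C N" and dec: "decseq A"
      have As: "range (\<lambda>i. A i \<inter> E N) \<subseteq> sets M1" "range (\<lambda>i. A i \<inter> E N) \<subseteq> sets M2"
        using A E_sets s1 s2 by (auto simp: C_def)
      have decA: "decseq (\<lambda>i. A i \<inter> E N)" using dec by (auto simp: decseq_def)
      have eq: "(\<Inter>i. A i \<inter> E N) = (\<Inter>i. A i) \<inter> E N" by auto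
      have l1: "(\<lambda>i. measure M1 (A i \<inter> E N)) \<longlonglongrightarrow> measure M1 ((\<Inter>i. A i) \<inter> E N)"
        using m1.finite_Lim_measure_decseq[OF As(1) decA] eq by simp
      have l2: "(\<lambda>i. c * measure M2 (A i \<inter> E N)) \<longlonglongrightarrow> c * measure M2 ((\<Inter>i. A i) \<inter> E N)"
        using m2.finite_Lim_measure_decseq[OF As(2) decA] eq by (simp add: tendsto_mult_left)
      have "measure M1 ((\<Inter>i. A i) \<inter> E N) \<le> c * measure M2 ((\<Inter>i. A i) \<inter> E N)"
        by (rule LIMSEQ_le[OF l1 l2]) (use A in \<open>auto simp: C_def\<close>)
      moreover have "(\<Inter>i. A i) \<in> sets Omega_inf" using A by (auto simp: C_def)
      ultimately show "(\<Inter>i. A i) \<in> C N" by (simp add: C_def)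
    qed
  qed
  show ?thesis
  proof (cases "S \<in> sets Omega_inf")
    case False
    then show ?thesis using s1 s2 by (simp add: measure_notin_sets)
  next
    case True
    have As: "range (\<lambda>N. S \<inter> E N) \<subseteq> sets M1" "range (\<lambda>N. S \<inter> E N) \<subseteq> sets M2"
      using True E_sets s1 s2 by auto
    have incE: "incseq (\<lambda>N. S \<inter> E N)" by (auto simp: incseq_def E_def)
    have eq: "(\<Union>N. S \<inter> E N) = S" using S by (auto simp: E_def Q_def)
    have l1: "(\<lambda>N. measure M1 (S \<inter> E N)) \<longlonglongrightarrow> measure M1 S"
      using m1.finite_Lim_measure_incseq[OF As(1) incE] eq by simp
    have l2: "(\<lambda>N. c * measure M2 (S \<inter> E N)) \<longlonglongrightarrow> c * measure M2 S"
      using m2.finite_Lim_measure_incseq[OF As(2) incE] eq by (simp add: tendsto_mult_left)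
    show ?thesis
      by (rule LIMSEQ_le[OF l1 l2]) (use step4[OF True] in \<open>auto simp: C_def\<close>)
  qed
qed


lemma length_play: "length (play f g \<omega> T) = T"
  by (induction T) auto

lemma play_nth: "n < T \<Longrightarrow> play f g \<omega> T ! n = (\<omega> n, f (play f g \<omega> n), g (play f g \<omega> n))"
proof (induction T)
  case 0 then show ?case by simp
next
  case (Suc T)
  then show ?case by (cases "n < T") (auto simp: nth_append length_play less_Suc_eq)
qed

lemma arithR:
  fixes a b e :: real
  assumes "0 < e" "e < 1/2" "a \<ge> 0" "b \<ge> 0"
    and "(if a > 0 \<or> b > 0 then a / (a + b) else 1/2) < e"
  shows "a \<le> e / (1 - e) * b"
proof (cases "a > 0 \<or> b > 0")
  case True
  then have ab: "a + b > 0" using assms by auto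
  then have "a < e * (a + b)" using assms(5) True by (simp add: divide_less_eq)
  then have "a * (1 - e) \<le> e * b" by (simp add: algebra_simps)
  then show ?thesis using assms by (simp add: field_simps)
next
  case False
  then show ?thesis using assms by auto
qed

lemma arithL:
  fixes a b e :: real
  assumes "1/2 < e" "e < 1" "a \<ge> 0" "b \<ge> 0"
    and "(if a > 0 \<or> b > 0 then a / (a + b) else 1/2) > e"
  shows "b \<le> (1 - e) / e * a"
proof (cases "a > 0 \<or> b > 0")
  case True
  then have ab: "a + b > 0" using assms by auto
  then have "a > e * (a + b)" using assms(5) True by (simp add: less_divide_eq)
  then have "b * e \<le> (1 - e) * a" by (simp add: algebra_simps)
  then show ?thesis using assms by (simp add: field_simps)
next
  case False
  then show ?thesis using assms by auto
qed

lemma dt_eq: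
  assumes f: "induced_measure f g fst \<mu>f" and g: "induced_measure f g snd \<mu>g"
  shows "deriv_test (Suc t) (play f g \<omega> (Suc t)) =
    (let a = measure \<mu>f (cyl \<omega> t); b = measure \<mu>g (cyl \<omega> t) in
      if a > 0 \<or> b > 0 then a / (a + b) else 1/2)"
proof -
  have pn: "\<And>n. n < t \<Longrightarrow> play f g \<omega> (Suc t) ! n = (\<omega> n, f (play f g \<omega> n), g (play f g \<omega> n))"
    by (simp add: play_nth del: play.simps)
  have "prefix_prob_f (play f g \<omega> (Suc t)) t = measure \<mu>f (cyl \<omega> t)"
    using f unfolding induced_measure_def prefix_prob_f_def
    by (auto intro!: prod.cong simp: pn simp del: play.simps)
  moreover have "prefix_prob_g (play f g \<omega> (Suc t)) t = measure \<mu>g (cyl \<omega> t)"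
    using g unfolding induced_measure_def prefix_prob_g_def
    by (auto intro!: prod.cong simp: pn simp del: play.simps)
  ultimately show ?thesis by simp
qed

theorem proposition2:
  shows "error_free deriv_test"
  unfolding error_free_def
proof (intro allI impI ballI conjI)
  fix f g \<mu>f \<mu>g A
  assume f: "induced_measure f g fst \<mu>f" and g: "induced_measure f g snd \<mu>g"
  have fmf: "finite_measure \<mu>f" and fmg: "finite_measure \<mu>g"
    and sf: "sets \<mu>f = sets Omega_inf" and sg: "sets \<mu>g = sets Omega_inf"
    using f g by (auto simp: induced_measure_def prob_space_def)
  define v where "v \<omega> t = deriv_test t (play f g \<omega> t)" for \<omega> t
  have v: "v \<omega> (Suc t) = (let a = measure \<mu>f (cyl \<omega> t); b = measure \<mu>g (cyl \<omega> t) in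
      if a > 0 \<or> b > 0 then a / (a + b) else 1/2)" for \<omega> t
    unfolding v_def by (rule dt_eq[OF f g])
  show "measure \<mu>f (A \<inter> R_set deriv_test f g e) \<le> e / (1 - e) * measure \<mu>g (A \<inter> R_set deriv_test f g e)"
    if e: "0 < e \<and> e < 1/2" for e
  proof (rule key[OF fmf fmg sf sg])
    show "A \<inter> R_set deriv_test f g e \<subseteq> (\<Union>N. {\<omega>. \<forall>t\<ge>N. measure \<mu>f (cyl \<omega> t) \<le> e / (1 - e) * measure \<mu>g (cyl \<omega> t)})"
    proof
      fix \<omega> assume "\<omega> \<in> A \<inter> R_set deriv_test f g e"
      then obtain l where l: "(\<lambda>t. v \<omega> t) \<longlonglongrightarrow> l" "l < e" by (auto simp: R_set_def v_def)
      have "(\<lambda>t. v \<omega> (Suc t)) \<longlonglongrightarrow> l" using l(1) by (rule LIMSEQ_Suc)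
      then have "eventually (\<lambda>t. v \<omega> (Suc t) < e) sequentially" using l(2) by (rule order_tendstoD(2))
      then obtain N where N: "\<And>t. t \<ge> N \<Longrightarrow> v \<omega> (Suc t) < e" by (auto simp: eventually_sequentially)
      have "measure \<mu>f (cyl \<omega> t) \<le> e / (1 - e) * measure \<mu>g (cyl \<omega> t)" if "t \<ge> N" for t
        by (rule arithR) (use e N[OF that] in \<open>simp_all add: v Let_def\<close>)
      then show "\<omega> \<in> (\<Union>N. {\<omega>. \<forall>t\<ge>N. measure \<mu>f (cyl \<omega> t) \<le> e / (1 - e) * measure \<mu>g (cyl \<omega> t)})"
        by blast
    qed
  qed
  show "measure \<mu>g (A \<inter> L_set deriv_test f g e) \<le> (1 - e) / e * measure \<mu>f (A \<inter> L_set deriv_test f g e)"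
    if e: "1/2 < e \<and> e < 1" for e
  proof (rule key[OF fmg fmf sg sf])
    show "A \<inter> L_set deriv_test f g e \<subseteq> (\<Union>N. {\<omega>. \<forall>t\<ge>N. measure \<mu>g (cyl \<omega> t) \<le> (1 - e) / e * measure \<mu>f (cyl \<omega> t)})"
    proof
      fix \<omega> assume "\<omega> \<in> A \<inter> L_set deriv_test f g e"
      then obtain l where l: "(\<lambda>t. v \<omega> t) \<longlonglongrightarrow> l" "l > e" by (auto simp: L_set_def v_def)
      have "(\<lambda>t. v \<omega> (Suc t)) \<longlonglongrightarrow> l" using l(1) by (rule LIMSEQ_Suc)
      then have "eventually (\<lambda>t. v \<omega> (Suc t) > e) sequentially" using l(2) by (rule order_tendstoD(1))
      then obtain N where N: "\<And>t. t \<ge> N \<Longrightarrow> v \<omega> (Suc t) > e" by (auto simp: eventually_sequentially)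
      have "measure \<mu>g (cyl \<omega> t) \<le> (1 - e) / e * measure \<mu>f (cyl \<omega> t)" if "t \<ge> N" for t
        by (rule arithL) (use e N[OF that] in \<open>simp_all add: v Let_def\<close>)
      then show "\<omega> \<in> (\<Union>N. {\<omega>. \<forall>t\<ge>N. measure \<mu>g (cyl \<omega> t) \<le> (1 - e) / e * measure \<mu>f (cyl \<omega> t)})"
        by blast
    qed
  qed
qed

end
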